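(* Suppose Assumption A holds and let $\{x^k\}$ be an infinite sequence generated by Algorithm 1 with $G_k\in\mathcal{S}_{\ell,\mu}(F,x^k)$ for all $k$ (fixed $\ell\in K$, $\mu\in\mathrm{int}(K)$). Then $\{x^k\}$ has at least one accumulation point, and every accumulation point of $\{x^k\}$ is a $K$-stationary point of $\min_K F(x)$.
   Context: $K\subset\mathbb{R}^m$ is a closed, convex, pointed cone with nonempty interior; $y\preceq_K y'$ means $y'-y\in K$. $K^*=\{c:\langle c,y\rangle\ge0\ \forall y\in K\}$, and $C$ is a compact convex set with $0\notin C$, $\mathrm{cone}(C)=K^*$. $F:\mathbb{R}^n\to\mathbb{R}^m$ is differentiable with Jacobian $JF$. A point $x^*$ is $K$-stationary if $\mathrm{range}(JF(x^* ))\cap(-\mathrm{int}(K))=\emptyset$. For differentiable $\Phi$: strongly $K$-convex with $\mu\in K$ means $J\Phi(x)(y-x)+\tfrac12\|y-x\|^2\mu\preceq_K\Phi(y)-\Phi(x)$ for all $x,y$; $K$-smooth with $\ell\in K$ means $\Phi(y)-\Phi(x)\preceq_K J\Phi(x)(y-x)+\tfrac12\|y-x\|^2\ell$ for all $x,y$. Surrogate class $\mathcal{S}_{\ell,\mu}(F,x^k)$ ($\ell\in K$, $\mu\in\mathrm{int}(K)$): differentiable $G_k$ strongly $K$-convex with $\mu$ such that, with $x^{k+1}$ the minimizer of $x\mapsto\max_{c^*\in C}\langle c^*,G_k(x)\rangle$ and $H_k:=G_k-F+F(x^k)$: $F(x^{k+1})-F(x^k)\preceq_K G_k(x^{k+1})$;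 $H_k$ is $K$-smooth with $\ell$, $H_k(x^k)=0$, $JH_k(x^k)=0$. Algorithm 1: from $x^0$, for $k=0,1,\dots$ choose $G_k\in\mathcal{S}_{\ell,\mu}(F,x^k)$ and set $x^{k+1}:=\arg\min_{x}\max_{c^*\in C}\langle c^*,G_k(x)\rangle$; stop if $x^{k+1}=x^k$. Assumption A: (i) the level set $\mathcal{L}_F(x^0)=\{x:F(x)\preceq_K F(x^0)\}$ is bounded; (ii) whenever $\mathcal{K}$ is an infinite index set with $x^k\to x^*$ along $\mathcal{K}$, $G_k\in\mathcal{S}_{\ell,\mu}(F,x^k)$, and $\max_{c^*\in C}\langle c^*,G_k(x^{k+1})\rangle\to0$ along $\mathcal{K}$, then $x^*$ is $K$-stationary. *)

theory Defs
  imports "HOL-Analysis.Analysis"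
begin

definition Kle :: "'b::euclidean_space set \<Rightarrow> 'b \<Rightarrow> 'b \<Rightarrow> bool" where
  "Kle K y y' \<longleftrightarrow> y' - y \<in> K"

definition proper_cone :: "'b::euclidean_space set \<Rightarrow> bool" where
  "proper_cone K \<longleftrightarrow> cone K \<and> closed K \<and> convex K \<and> K \<inter> uminus ` K = {0} \<and> interior K \<noteq> {}"

definition dual_cone :: "'b::euclidean_space set \<Rightarrow> 'b set" where
  "dual_cone K = {c. \<forall>y\<in>K. 0 \<le> c \<bullet> y}"

definition scal :: "'b::euclidean_space set \<Rightarrow> 'b \<Rightarrow> real" where
  "scal C v = Sup ((\<lambda>c. c \<bullet> v) ` C)"

definition K_stationary ::
  "'b::euclidean_space set \<Rightarrow> ('a::euclidean_space \<Rightarrow> 'a \<Rightarrow> 'b) \<Rightarrow> 'a \<Rightarrow> bool" where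
  "K_stationary K JF x \<longleftrightarrow> range (JF x) \<inter> uminus ` interior K = {}"

definition strongly_K_convex ::
  "'b::euclidean_space set \<Rightarrow> ('a::euclidean_space \<Rightarrow> 'b) \<Rightarrow> 'b \<Rightarrow> bool" where
  "strongly_K_convex K \<Phi> \<mu> \<longleftrightarrow> (\<exists>J\<Phi>. (\<forall>x. (\<Phi> has_derivative J\<Phi> x) (at x)) \<and>
     (\<forall>x y. Kle K (J\<Phi> x (y - x) + ((1/2) * (norm (y - x))\<^sup>2) *\<^sub>R \<mu>) (\<Phi> y - \<Phi> x)))"

definition K_smooth ::
  "'b::euclidean_space set \<Rightarrow> ('a::euclidean_space \<Rightarrow> 'b) \<Rightarrow> 'b \<Rightarrow> bool" where
  "K_smooth K \<Phi> ell \<longleftrightarrow> (\<exists>J\<Phi>. (\<forall>x. (\<Phi> has_derivative J\<Phi> x) (at x)) \<and>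
     (\<forall>x y. Kle K (\<Phi> y - \<Phi> x) (J\<Phi> x (y - x) + ((1/2) * (norm (y - x))\<^sup>2) *\<^sub>R ell)))"

definition surrogates ::
  "'b::euclidean_space set \<Rightarrow> 'b set \<Rightarrow> 'b \<Rightarrow> 'b \<Rightarrow> ('a::euclidean_space \<Rightarrow> 'b) \<Rightarrow> 'a \<Rightarrow> ('a \<Rightarrow> 'b) set" where
  "surrogates K C ell \<mu> F xk = {G.
     strongly_K_convex K G \<mu> \<and>
     (\<forall>z. is_arg_min (\<lambda>x. scal C (G x)) (\<lambda>_. True) z \<longrightarrow> Kle K (F z - F xk) (G z)) \<and>
     (let H = (\<lambda>x. G x - F x + F xk) in
        K_smooth K H ell \<and> H xk = 0 \<and> (H has_derivative (\<lambda>_. 0)) (at xk))}"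

end

theory Submission
  imports Defs
begin

lemma bipolar:
  fixes K :: "'b::euclidean_space set"
  assumes "cone K" "closed K" "convex K" "0 \<in> K"
    and "\<And>c. c \<in> dual_cone K \<Longrightarrow> 0 \<le> c \<bullet> v"
  shows "v \<in> K"
proof (rule ccontr)
  assume "v \<notin> K"
  then obtain a b where ab: "a \<bullet> v < b" "\<forall>y\<in>K. b < a \<bullet> y"
    using separating_hyperplane_closed_point[OF assms(3,2)] by blast
  have b0: "b < 0" using ab(2) assms(4) by force
  have "a \<in> dual_cone K"
    unfolding dual_cone_def
  proof (clarify)
    fix y assume y: "y \<in> K"
    show "0 \<le> a \<bullet> y"
    proof (rule ccontr)
      assume neg: "\<not> 0 \<le> a \<bullet> y"
      define t where "t = b / (a \<bullet> y)"
      have t: "t \<ge> 0" using neg b0 unfolding t_def by (simp add: divide_nonpos_neg)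
      have "t *\<^sub>R y \<in> K" using assms(1) y t unfolding cone_def by blast
      then have "b < a \<bullet> (t *\<^sub>R y)" using ab(2) by blast
      also have "a \<bullet> (t *\<^sub>R y) = b" using neg unfolding t_def by simp
      finally show False by simp
    qed
  qed
  then have "0 \<le> a \<bullet> v" using assms(5) by blast
  then show False using ab(1) b0 by linarith
qed

theorem theorem1:
  fixes K C :: "'b::euclidean_space set"
    and F :: "'a::euclidean_space \<Rightarrow> 'b"
    and JF :: "'a \<Rightarrow> 'a \<Rightarrow> 'b"
    and ell \<mu> :: 'b
    and x :: "nat \<Rightarrow> 'a"
    and G :: "nat \<Rightarrow> 'a \<Rightarrow> 'b"
  assumes K: "proper_cone K"
    and C: "compact C" "convex C" "0 \<notin> C" "cone hull C = dual_cone K"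
    and F: "\<And>z. (F has_derivative JF z) (at z)"
    and ell: "ell \<in> K" and \<mu>: "\<mu> \<in> interior K"
    and G: "\<And>k. G k \<in> surrogates K C ell \<mu> F (x k)"
    and step: "\<And>k. is_arg_min (\<lambda>z. scal C (G k z)) (\<lambda>_. True) (x (Suc k))"
    and infinite: "\<And>k. x (Suc k) \<noteq> x k"
    and A1: "bounded {z. Kle K (F z) (F (x 0))}"
    and A2: "\<And>r xs. strict_mono r \<Longrightarrow> (x \<circ> r) \<longlonglongrightarrow> xs \<Longrightarrow>
               (\<lambda>j. scal C (G (r j) (x (Suc (r j))))) \<longlonglongrightarrow> 0 \<Longrightarrow> K_stationary K JF xs"
  shows "(\<exists>r a. strict_mono r \<and> (x \<circ> r) \<longlonglongrightarrow> a) \<and>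
         (\<forall>r a. strict_mono r \<and> (x \<circ> r) \<longlonglongrightarrow> a \<longrightarrow> K_stationary K JF a)"
proof -
  have Kc: "cone K" "closed K" "convex K" and K0: "0 \<in> K"
    using K unfolding proper_cone_def by auto
  have Cne: "C \<noteq> {}"
  proof
    assume "C = {}"
    then have "dual_cone K = {}" using C(4) cone_hull_empty by metis
    moreover have "0 \<in> dual_cone K" unfolding dual_cone_def by simp
    ultimately show False by simp
  qed
  have CK: "\<And>c y. c \<in> C \<Longrightarrow> y \<in> K \<Longrightarrow> 0 \<le> c \<bullet> y"
    using C(4) hull_subset[of C cone] unfolding dual_cone_def by blast
  have bdd: "\<And>v. bdd_above ((\<lambda>c. c \<bullet> v) ` C)"
  proof -
    fix v
    obtain B where B: "\<forall>c\<in>C. norm c \<le> B" using compact_imp_bounded[OF C(1)] bounded_iff by blast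
    have "\<forall>c\<in>C. c \<bullet> v \<le> B * norm v"
      using B by (metis Cauchy_Schwarz_ineq2 abs_le_D1 mult_right_mono norm_ge_zero order_trans)
    then show "bdd_above ((\<lambda>c. c \<bullet> v) ` C)" by (auto simp: bdd_above_def)
  qed
  have scal_ge: "\<And>c v. c \<in> C \<Longrightarrow> c \<bullet> v \<le> scal C v"
    unfolding scal_def using bdd by (meson cSUP_upper)
  have scal0: "scal C 0 = 0" unfolding scal_def using Cne by simp
  define phi where "phi k = scal C (G k (x (Suc k)))" for k
  have Gx: "G k (x k) = 0" for k
    using G[of k] unfolding surrogates_def Let_def by auto
  have phi_le: "phi k \<le> 0" for k
    using step[of k] Gx[of k] scal0 unfolding phi_def is_arg_min_def by (metis not_le)
  have desc: "c \<bullet> F (x (Suc k)) - c \<bullet> F (x k) \<le> phi k" if c: "c \<in> C" for c k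
  proof -
    have "Kle K (F (x (Suc k)) - F (x k)) (G k (x (Suc k)))"
      using G[of k] step[of k] unfolding surrogates_def by auto
    then have "0 \<le> c \<bullet> (G k (x (Suc k)) - (F (x (Suc k)) - F (x k)))"
      unfolding Kle_def using CK c by blast
    then have "c \<bullet> F (x (Suc k)) - c \<bullet> F (x k) \<le> c \<bullet> G k (x (Suc k))"
      by (simp add: inner_diff_right)
    also have "\<dots> \<le> phi k" unfolding phi_def using scal_ge c by blast
    finally show ?thesis .
  qed
  have mono: "c \<bullet> F (x k) \<le> c \<bullet> F (x 0)" if c: "c \<in> C" for c k
  proof (induction k)
    case (Suc k)
    then show ?case using desc[OF c, of k] phi_le[of k] by linarith
  qed simp
  have inL: "x k \<in> {z. Kle K (F z) (F (x 0))}" for k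
  proof -
    have "F (x 0) - F (x k) \<in> K"
    proof (rule bipolar[OF Kc K0])
      fix c assume "c \<in> dual_cone K"
      then have "c \<in> cone hull C" using C(4) by simp
      then have "c \<in> {c *\<^sub>R x |c x. 0 \<le> c \<and> x \<in> C}"
        by (simp only: cone_hull_expl)
      then obtain t c' where tc: "c = t *\<^sub>R c'" "0 \<le> t" "c' \<in> C"
        by blast
      have "0 \<le> c' \<bullet> (F (x 0) - F (x k))" using mono[OF tc(3), of k] by (simp add: inner_diff_right)
      then show "0 \<le> c \<bullet> (F (x 0) - F (x k))" using tc by simp
    qed
    then show ?thesis by (simp add: Kle_def)
  qed
  have xb: "bounded (range x)"
    by (rule bounded_subset[OF A1]) (use inL in auto)
  have part1: "\<exists>r a. strict_mono r \<and> (x \<circ> r) \<longlonglongrightarrow> a"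
    using bounded_imp_convergent_subsequence[OF xb] by blast
  have contF: "continuous_on UNIV F"
    by (intro continuous_at_imp_continuous_on ballI has_derivative_continuous[OF F])
  have "compact (F ` closure (range x))"
    by (rule compact_continuous_image[OF continuous_on_subset[OF contF]]) (use xb compact_closure in auto)
  then have "bounded (F ` closure (range x))" by (rule compact_imp_bounded)
  then have "bounded (F ` range x)"
    by (rule bounded_subset) (use closure_subset in blast)
  then obtain M where M: "\<And>k. norm (F (x k)) \<le> M" unfolding bounded_iff by auto
  obtain c0 where c0: "c0 \<in> C" using Cne by blast
  define a where "a k = c0 \<bullet> F (x k)" for k
  have "Bseq a"
  proof (rule BseqI'[of _ "norm c0 * M"])
    fix k
    have "norm (a k) \<le> norm c0 * norm (F (x k))"
      unfolding a_def by (simp add: Cauchy_Schwarz_ineq2)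
    also have "\<dots> \<le> norm c0 * M" using M[of k] by (simp add: mult_left_mono)
    finally show "norm (a k) \<le> norm c0 * M" .
  qed
  moreover have "decseq a"
    unfolding decseq_Suc_iff a_def using desc[OF c0] phi_le by (smt (verit))
  ultimately have "convergent a"
    using Bseq_monoseq_convergent monoseq_iff by blast
  then obtain La where La: "a \<longlonglongrightarrow> La" by (auto simp: convergent_def)
  have "(\<lambda>k. a (Suc k) - a k) \<longlonglongrightarrow> La - La"
    by (intro tendsto_diff La LIMSEQ_Suc)
  then have d0: "(\<lambda>k. a (Suc k) - a k) \<longlonglongrightarrow> 0" by simp
  have phi0: "phi \<longlonglongrightarrow> 0"
  proof (rule tendsto_sandwich[OF _ _ d0 tendsto_const])
    show "\<forall>\<^sub>F k in sequentially. a (Suc k) - a k \<le> phi k"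
      using desc[OF c0] unfolding a_def by simp
    show "\<forall>\<^sub>F k in sequentially. phi k \<le> 0" using phi_le by simp
  qed
  have part2: "K_stationary K JF xs" if "strict_mono r" "(x \<circ> r) \<longlonglongrightarrow> xs" for r xs
  proof (rule A2[OF that])
    have "(phi \<circ> r) \<longlonglongrightarrow> 0" using LIMSEQ_subseq_LIMSEQ[OF phi0 that(1)] .
    then show "(\<lambda>j. scal C (G (r j) (x (Suc (r j))))) \<longlonglongrightarrow> 0"
      by (simp add: phi_def o_def)
  qed
  show ?thesis using part1 part2 by blast
qed

end
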